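(* Let $D$ be a strongly connected digraph with exactly three complementarity eigenvalues. If $D$ contains a subdigraph isomorphic to an $\infty$-digraph $\infty(r,s)$, then $D$ is isomorphic to $\infty(r,s)$, to a Type 1 digraph $D_1(r,s)$, or to a Type 2 digraph $D_2(r,s)$ (for some appropriate labelling of the two cycles).
   Context: All digraphs are finite, without loops and without multiple arcs. For a digraph $D$ with adjacency matrix $A$ (on $n$ vertices), a real $\lambda$ is a complementarity eigenvalue if there is a nonzero $x\in\mathbb{R}^n$, $x\ge0$, with $Ax-\lambda x\ge 0$ and $\langle x,Ax-\lambda x\rangle=0$; $\Pi(D)$ is the set of complementarity eigenvalues. Subdigraphs need not be induced. For $r,s\ge2$, $\infty(r,s)$ is the coalescence of a directed cycle $\vec C_r$ on vertices $1,2,\dots,r$ (arcs $(i,i+1)$ and $(r,1)$) and a directed cycle $\vec C_s$ on vertices $1',2',\dots,s'$ (arcs $(i',(i+1)')$ and $(s',1')$), where $1'$ is identified with $1$. The Type 1 digraph is $D_1(r,s)=\infty(r,s)$ together with the arc $(r,2')$. The Type 2 digraph is $D_2(r,s)=\infty(r,s)$ together with the arcs $(r,2')$ and $(s',2)$. *)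

theory Defs
  imports Complex_Main
begin

definition digraph :: "'a set \<Rightarrow> ('a \<times> 'a) set \<Rightarrow> bool" where
  "digraph V E \<longleftrightarrow> finite V \<and> E \<subseteq> V \<times> V \<and> (\<forall>v. (v, v) \<notin> E)"

definition adj :: "('a \<times> 'a) set \<Rightarrow> 'a \<Rightarrow> 'a \<Rightarrow> real" where
  "adj E u v = (if (u, v) \<in> E then 1 else 0)"

definition comp_eigenvalues :: "'a set \<Rightarrow> ('a \<times> 'a) set \<Rightarrow> real set" where
  "comp_eigenvalues V E = {lam. \<exists>x :: 'a \<Rightarrow> real.
      (\<forall>v\<in>V. x v \<ge> 0) \<and> (\<exists>v\<in>V. x v \<noteq> 0) \<and>
      (\<forall>v\<in>V. (\<Sum>u\<in>V. adj E v u * x u) - lam * x v \<ge> 0) \<and>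
      (\<Sum>v\<in>V. x v * ((\<Sum>u\<in>V. adj E v u * x u) - lam * x v)) = 0}"

definition strongly_connected :: "'a set \<Rightarrow> ('a \<times> 'a) set \<Rightarrow> bool" where
  "strongly_connected V E \<longleftrightarrow> (\<forall>u\<in>V. \<forall>v\<in>V. (u, v) \<in> E\<^sup>*)"

definition has_subdigraph_iso ::
    "'a set \<Rightarrow> ('a \<times> 'a) set \<Rightarrow> 'b set \<Rightarrow> ('b \<times> 'b) set \<Rightarrow> bool" where
  "has_subdigraph_iso V E V' E' \<longleftrightarrow>
     (\<exists>f. inj_on f V' \<and> f ` V' \<subseteq> V \<and> (\<forall>(u, v)\<in>E'. (f u, f v) \<in> E))"

definition digraph_iso ::
    "'a set \<Rightarrow> ('a \<times> 'a) set \<Rightarrow> 'b set \<Rightarrow> ('b \<times> 'b) set \<Rightarrow> bool" where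
  "digraph_iso V E V' E' \<longleftrightarrow>
     (\<exists>f. bij_betw f V V' \<and> (\<forall>u\<in>V. \<forall>v\<in>V. (u, v) \<in> E \<longleftrightarrow> (f u, f v) \<in> E'))"

text \<open>Vertices of \<infinity>(r,s): Inl i (1 \<le> i \<le> r) is vertex i of the r-cycle,
  Inr j (2 \<le> j \<le> s) is vertex j' of the s-cycle; vertex 1' is identified with Inl 1.\<close>
definition cv1 :: "nat \<Rightarrow> nat + nat" where "cv1 i = Inl i"
definition cv2 :: "nat \<Rightarrow> nat + nat" where "cv2 j = (if j = 1 then Inl 1 else Inr j)"

definition inf_verts :: "nat \<Rightarrow> nat \<Rightarrow> (nat + nat) set" where
  "inf_verts r s = cv1 ` {1..r} \<union> cv2 ` {1..s}"

definition inf_arcs :: "nat \<Rightarrow> nat \<Rightarrow> ((nat + nat) \<times> (nat + nat)) set" where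
  "inf_arcs r s =
     {(cv1 i, cv1 (i + 1)) | i. 1 \<le> i \<and> i < r} \<union> {(cv1 r, cv1 1)} \<union>
     {(cv2 j, cv2 (j + 1)) | j. 1 \<le> j \<and> j < s} \<union> {(cv2 s, cv2 1)}"

definition type1_arcs :: "nat \<Rightarrow> nat \<Rightarrow> ((nat + nat) \<times> (nat + nat)) set" where
  "type1_arcs r s = inf_arcs r s \<union> {(cv1 r, cv2 2)}"

definition type2_arcs :: "nat \<Rightarrow> nat \<Rightarrow> ((nat + nat) \<times> (nat + nat)) set" where
  "type2_arcs r s = inf_arcs r s \<union> {(cv1 r, cv2 2), (cv2 s, cv1 2)}"

end

theory Submission
  imports Defs "HOL-Analysis.Analysis"
begin


definition Av :: "('a \<times> 'a) set \<Rightarrow> 'a set \<Rightarrow> ('a \<Rightarrow> real) \<Rightarrow> 'a \<Rightarrow> real" where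
  "Av E J x v = (\<Sum>u\<in>J. adj E v u * x u)"

definition feas :: "('a \<times> 'a) set \<Rightarrow> 'a set \<Rightarrow> ('a \<Rightarrow> real) \<Rightarrow> real \<Rightarrow> bool" where
  "feas E J x \<mu> \<longleftrightarrow> (\<forall>v. v \<notin> J \<longrightarrow> x v = 0) \<and> (\<forall>v\<in>J. 0 \<le> x v) \<and> sum x J = 1 \<and>
     (\<forall>v\<in>J. \<mu> * x v \<le> Av E J x v)"

lemma adj_nonneg: "0 \<le> adj E u v" by (simp add: adj_def)
lemma adj_le1: "adj E u v \<le> 1" by (simp add: adj_def)

lemma feas_bound:
  assumes "finite J" "feas E J x \<mu>"
  shows "\<mu> \<le> real (card J)"
proof -
  from assms have nn: "\<forall>v\<in>J. 0 \<le> x v" and s1: "sum x J = 1" and ineq: "\<forall>v\<in>J. \<mu> * x v \<le> Av E J x v"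
    by (auto simp: feas_def)
  have "J \<noteq> {}" using s1 by auto
  define M where "M = Max (x ` J)"
  have "M \<in> x ` J" unfolding M_def using assms(1) \<open>J \<noteq> {}\<close> by (intro Max_in) auto
  then obtain v where v0: "v \<in> J" "x v = M" by auto
  have "\<forall>u\<in>J. x u \<le> x v" using v0 assms(1) unfolding M_def by auto
  note v = v0(1) this
  have "1 \<le> real (card J) * x v" using s1 sum_bounded_above[of J x "x v"] v by auto
  hence xv: "x v > 0" using \<open>J \<noteq> {}\<close> nn v
    by (metis mult_zero_right not_le order.not_eq_order_implies_strict zero_less_one)
  have "Av E J x v \<le> (\<Sum>u\<in>J. x v)" unfolding Av_def
    by (rule sum_mono) (metis v(2) adj_le1 adj_nonneg mult_left_le_one_le nn order.trans)
  also have "\<dots> = real (card J) * x v" by simp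
  finally have "\<mu> * x v \<le> real (card J) * x v" using ineq v by (meson order.trans)
  thus ?thesis using xv by simp
qed

lemma cont_coord: "continuous_on UNIV (\<lambda>p::('a \<Rightarrow> real) \<times> real. fst p v)"
  by (rule continuous_on_compose2[OF continuous_on_product_coordinates[of v]]) (auto intro: continuous_intros)

lemma exists_max:
  fixes E :: "('a \<times> 'a) set"
  assumes "finite J" "J \<noteq> {}"
  shows "\<exists>x lam. feas E J x lam \<and> (\<forall>y \<mu>. feas E J y \<mu> \<longrightarrow> \<mu> \<le> lam)"
proof -
  define S :: "'a \<Rightarrow> real set" where "S = (\<lambda>v. if v \<in> J then {0..1} else {0})"
  define B where "B = Pi UNIV S"
  have cB: "compact B"
  proof -
    have "compactin (product_topology (\<lambda>i. euclidean) UNIV) (PiE UNIV S)"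
      by (subst compactin_PiE) (auto simp: S_def)
    thus ?thesis unfolding B_def by (simp add: euclidean_product_topology PiE_UNIV_domain)
  qed
  define N where "N = real (card J)"
  define K where "K = (B \<times> {0..N}) \<inter> {p. sum (fst p) J = 1} \<inter>
      (\<Inter>v\<in>J. {p. snd p * fst p v \<le> Av E J (fst p) v})"
  have cl1: "closed {p::('a \<Rightarrow> real) \<times> real. sum (fst p) J = 1}"
    by (rule closed_Collect_eq) (auto intro!: continuous_intros continuous_on_sum cont_coord)
  have cl2: "closed {p::('a \<Rightarrow> real) \<times> real. snd p * fst p v \<le> Av E J (fst p) v}" for v
    unfolding Av_def
    by (rule closed_Collect_le) (auto intro!: continuous_intros continuous_on_sum cont_coord continuous_on_mult)
  have cK: "compact K" unfolding K_def
    using cB cl1 cl2 by (intro compact_Int_closed compact_Times closed_INT) auto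
  obtain w where w: "w \<in> J" using assms by auto
  define e where "e = (\<lambda>v. if v = w then 1 else 0::real)"
  have "(e, 0) \<in> K" unfolding K_def B_def S_def e_def N_def using assms w
    by (auto simp: Av_def adj_def intro!: sum_nonneg)
  hence "K \<noteq> {}" by auto
  moreover have "continuous_on K snd" by (intro continuous_intros)
  ultimately obtain p where p: "p \<in> K" "\<forall>q\<in>K. snd q \<le> snd p"
    using continuous_attains_sup[OF cK] by blast
  have fp: "feas E J (fst p) (snd p)" using p(1) unfolding K_def B_def S_def feas_def
    by (auto simp: Pi_iff split: if_splits)
  moreover have "\<mu> \<le> snd p" if "feas E J y \<mu>" for y \<mu>
  proof (cases "\<mu> < 0")
    case True thus ?thesis using p(1) unfolding K_def by auto
  next
    case False
    have "\<mu> \<le> N" using feas_bound[OF assms(1) that] N_def by simp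
    moreover have "y \<in> B" unfolding B_def S_def
    proof (auto simp: Pi_iff)
      fix v assume "v \<in> J" thus "0 \<le> y v" using that by (auto simp: feas_def)
    next
      fix v assume v: "v \<in> J" 
      have "y v \<le> sum y J" using that v assms(1) by (intro member_le_sum) (auto simp: feas_def)
      thus "y v \<le> 1" using that by (auto simp: feas_def)
    next
      fix v assume "v \<notin> J" thus "y v = 0" using that by (auto simp: feas_def)
    qed
    ultimately have "(y, \<mu>) \<in> K" unfolding K_def using that False by (auto simp: feas_def)
    thus ?thesis using p(2) by force
  qed
  ultimately show ?thesis by blast
qed

definition scin :: "('a \<times> 'a) set \<Rightarrow> 'a set \<Rightarrow> bool" where
  "scin R Z \<longleftrightarrow> (\<forall>u\<in>Z. \<forall>v\<in>Z. (u, v) \<in> (R \<inter> Z \<times> Z)\<^sup>*)"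

lemma path_exit:
  assumes "(a, b) \<in> R\<^sup>*" "a \<notin> S" "b \<in> S"
  shows "\<exists>u w. (u, w) \<in> R \<and> u \<notin> S \<and> w \<in> S"
  using assms by (induction rule: rtrancl_induct) auto

lemma Av_add:
  assumes "finite J" "w \<in> J"
  shows "Av E J (\<lambda>u. y u + (if u = w then \<epsilon> else 0)) v = Av E J y v + adj E v w * \<epsilon>"
proof -
  have "(\<Sum>u\<in>J. adj E v u * (y u + (if u = w then \<epsilon> else 0)))
      = (\<Sum>u\<in>J. adj E v u * y u + (if u = w then adj E v w * \<epsilon> else 0))"
    by (intro sum.cong) (auto simp: distrib_left)
  also have "\<dots> = (\<Sum>u\<in>J. adj E v u * y u) + (\<Sum>u\<in>J. (if u = w then adj E v w * \<epsilon> else 0))"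
    by (rule sum.distrib)
  also have "\<dots> = (\<Sum>u\<in>J. adj E v u * y u) + adj E v w * \<epsilon>" using assms by simp
  finally show ?thesis unfolding Av_def .
qed

lemma Av_nonneg: "\<forall>u\<in>J. 0 \<le> y u \<Longrightarrow> 0 \<le> Av E J y v"
  unfolding Av_def by (intro sum_nonneg) (simp add: adj_nonneg)

lemma Av_mono: "\<forall>u\<in>J. y u \<le> z u \<Longrightarrow> Av E J y v \<le> Av E J z v"
  unfolding Av_def by (intro sum_mono mult_left_mono) (auto simp: adj_nonneg)

lemma Av_div: "Av E J (\<lambda>u. z u / s) v = Av E J z v / s"
  unfolding Av_def by (simp add: sum_divide_distrib)

lemma adj_arc: "(u, w) \<in> E \<Longrightarrow> adj E u w = 1" by (simp add: adj_def)
lemma adj_noarc: "(u, w) \<notin> E \<Longrightarrow> adj E u w = 0" by (simp add: adj_def)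

lemma maximizer_eig:
  assumes fin: "finite J" and sc: "scin E J" and nl: "\<forall>v. (v, v) \<notin> E"
    and fx: "feas E J x lam" and mx: "\<forall>y \<mu>. feas E J y \<mu> \<longrightarrow> \<mu> \<le> lam"
  shows "\<forall>v\<in>J. Av E J x v = lam * x v"
proof (rule ccontr)
  assume "\<not> ?thesis"
  then obtain v0 where v0: "v0 \<in> J" "lam * x v0 < Av E J x v0" using fx
    by (force simp: feas_def)
  define good where "good y \<longleftrightarrow> (\<forall>v. v \<notin> J \<longrightarrow> y v = 0) \<and> (\<forall>v\<in>J. 0 \<le> y v) \<and>
     (\<forall>v\<in>J. lam * y v \<le> Av E J y v)" for y
  define sl where "sl y = {v\<in>J. lam * y v < Av E J y v}" for y
  have step: "\<exists>y'. good y' \<and> sl y \<subset> sl y'" if gy: "good y" and ne: "sl y \<noteq> {}" and nJ: "sl y \<noteq> J" for y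
  proof -
    have slJ: "sl y \<subseteq> J" by (auto simp: sl_def)
    obtain a where a: "a \<in> J" "a \<notin> sl y" using nJ slJ by blast
    obtain b where b: "b \<in> sl y" using ne by blast
    have "(a, b) \<in> (E \<inter> J \<times> J)\<^sup>*" using sc a b slJ unfolding scin_def by blast
    then obtain u w where uw: "(u, w) \<in> E \<inter> J \<times> J" "u \<notin> sl y" "w \<in> sl y"
      using path_exit[of a b _ "sl y"] a b by blast
    have uJ: "u \<in> J" and wJ: "w \<in> J" using uw by auto
    define \<delta> where "\<delta> = Av E J y w - lam * y w"
    have dpos: "\<delta> > 0" using uw(3) by (simp add: sl_def \<delta>_def)
    define \<epsilon> where "\<epsilon> = \<delta> / (2 * (\<bar>lam\<bar> + 1))"
    have epos: "\<epsilon> > 0" using dpos by (simp add: \<epsilon>_def)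
    have lame: "lam * \<epsilon> < \<delta>"
    proof -
      have "lam * \<epsilon> \<le> \<bar>lam\<bar> * \<epsilon>" using epos by (simp add: mult_right_mono)
      also have "\<dots> < (\<bar>lam\<bar> + 1) * \<epsilon>" using epos by simp
      also have "\<dots> = \<delta> / 2" unfolding \<epsilon>_def by (simp add: field_simps)
      finally show ?thesis using dpos by simp
    qed
    define y' where "y' = (\<lambda>u. y u + (if u = w then \<epsilon> else 0))"
    have Ay': "Av E J y' v = Av E J y v + adj E v w * \<epsilon>" for v
      unfolding y'_def using Av_add[OF fin wJ] .
    have "adj E w w = 0" using nl by (simp add: adj_def)
    hence Aw: "Av E J y' w = Av E J y w" using Ay' by simp
    have strict_w: "lam * y' w < Av E J y' w"
      using Aw lame by (simp add: y'_def \<delta>_def distrib_left)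
    have ge: "Av E J y v \<le> Av E J y' v" for v using Ay' epos adj_nonneg[of E v w] by simp
    have good': "good y'"
      unfolding good_def
    proof (intro conjI ballI allI impI)
      fix v assume "v \<notin> J" thus "y' v = 0" using gy wJ by (auto simp: good_def y'_def)
    next
      fix v assume "v \<in> J" thus "0 \<le> y' v" using gy epos by (auto simp: good_def y'_def)
    next
      fix v assume v: "v \<in> J"
      show "lam * y' v \<le> Av E J y' v"
      proof (cases "v = w")
        case True thus ?thesis using strict_w by simp
      next
        case False
        hence "y' v = y v" by (simp add: y'_def)
        thus ?thesis using gy v ge[of v] by (auto simp: good_def)
      qed
    qed
    have sub: "sl y \<subseteq> sl y'"
    proof
      fix v assume v: "v \<in> sl y"
      show "v \<in> sl y'"
      proof (cases "v = w")
        case True thus ?thesis using strict_w wJ by (simp add: sl_def)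
      next
        case False
        hence "y' v = y v" by (simp add: y'_def)
        thus ?thesis using v ge[of v] by (auto simp: sl_def)
      qed
    qed
    have "u \<noteq> w" using uw by auto
    hence "y' u = y u" by (simp add: y'_def)
    moreover have "adj E u w = 1" using uw(1) by (simp add: adj_def)
    hence "Av E J y' u = Av E J y u + \<epsilon>" using Ay' by simp
    ultimately have "u \<in> sl y'" using gy uJ epos by (auto simp: good_def sl_def)
    hence "sl y \<subset> sl y'" using sub uw(2) by blast
    thus ?thesis using good' by blast
  qed
  have allsl: "\<forall>y. good y \<and> sl y \<noteq> {} \<and> card (J - sl y) \<le> n \<longrightarrow> (\<exists>z. good z \<and> sl z = J)" for n
  proof (induction n)
    case 0
    show ?case
    proof (intro allI impI)
      fix y assume h: "good y \<and> sl y \<noteq> {} \<and> card (J - sl y) \<le> 0"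
      hence "J - sl y = {}" using fin by simp
      hence "sl y = J" by (auto simp: sl_def)
      thus "\<exists>z. good z \<and> sl z = J" using h by blast
    qed
  next
    case (Suc n)
    show ?case
    proof (intro allI impI)
      fix y assume h: "good y \<and> sl y \<noteq> {} \<and> card (J - sl y) \<le> Suc n"
      show "\<exists>z. good z \<and> sl z = J"
      proof (cases "sl y = J")
        case True thus ?thesis using h by blast
      next
        case False
        then obtain y' where y': "good y'" "sl y \<subset> sl y'" using step h by blast
        have "sl y' \<subseteq> J" by (auto simp: sl_def)
        hence "J - sl y' \<subset> J - sl y" using y'(2) by (auto simp: sl_def)
        hence "card (J - sl y') < card (J - sl y)" using fin by (meson finite_Diff psubset_card_mono)
        hence "card (J - sl y') \<le> n" using h by simp
        moreover have "sl y' \<noteq> {}" using y'(2) by blast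
        ultimately show ?thesis using Suc.IH y'(1) by blast
      qed
    qed
  qed
  have "good x" using fx by (auto simp: good_def feas_def)
  moreover have "sl x \<noteq> {}" using v0 by (auto simp: sl_def)
  ultimately obtain z where z: "good z" "sl z = J" using allsl by blast
  have zs: "\<forall>v\<in>J. lam * z v < Av E J z v" using z(2) by (auto simp: sl_def)
  have znn: "\<forall>v\<in>J. 0 \<le> z v" using z(1) by (auto simp: good_def)
  have "\<exists>v\<in>J. 0 < z v"
  proof (rule ccontr)
    assume "\<not> ?thesis"
    hence "\<forall>v\<in>J. z v = 0" using znn by force
    hence "Av E J z v0 = 0" unfolding Av_def by simp
    thus False using zs v0 \<open>\<forall>v\<in>J. z v = 0\<close> by force
  qed
  then obtain v1 where v1: "v1 \<in> J" "0 < z v1" by blast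
  define s where "s = sum z J"
  have spos: "s > 0" unfolding s_def using fin v1 znn by (intro sum_pos2[where i=v1]) auto
  define q where "q v = (Av E J z v - lam * z v) / (z v + 1)" for v
  define \<eta> where "\<eta> = Min (q ` J)"
  have qpos: "\<forall>v\<in>J. q v > 0" using zs znn by (auto simp: q_def intro!: divide_pos_pos)
  have etapos: "\<eta> > 0" unfolding \<eta>_def using fin v0 qpos by (subst Min_gr_iff) auto
  have eta_le: "\<eta> \<le> q v" if "v \<in> J" for v unfolding \<eta>_def using fin that by simp
  have ineq: "(lam + \<eta>) * z v \<le> Av E J z v" if v: "v \<in> J" for v
  proof -
    have "\<eta> * z v \<le> q v * z v" using eta_le[OF v] znn v by (simp add: mult_right_mono)
    also have "\<dots> \<le> q v * (z v + 1)" using qpos v by simp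
    also have "\<dots> = Av E J z v - lam * z v"
    proof -
      have "0 \<le> z v" using znn v by blast
      hence "z v + 1 \<noteq> 0" by linarith
      thus ?thesis unfolding q_def by simp
    qed
    finally show ?thesis by (simp add: distrib_right)
  qed
  have "feas E J (\<lambda>u. z u / s) (lam + \<eta>)"
    unfolding feas_def
  proof (intro conjI ballI allI impI)
    fix v assume "v \<notin> J" thus "z v / s = 0" using z(1) by (simp add: good_def)
  next
    fix v assume "v \<in> J" thus "0 \<le> z v / s" using znn spos by simp
  next
    show "(\<Sum>u\<in>J. z u / s) = 1" using spos by (simp add: sum_divide_distrib[symmetric] s_def)
  next
    fix v assume v: "v \<in> J"
    have "(lam + \<eta>) * (z v / s) = ((lam + \<eta>) * z v) / s" by simp
    also have "\<dots> \<le> Av E J z v / s" using ineq[OF v] spos by (simp add: divide_right_mono)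
    finally show "(lam + \<eta>) * (z v / s) \<le> Av E J (\<lambda>u. z u / s) v" by (simp add: Av_div)
  qed
  hence "lam + \<eta> \<le> lam" using mx by blast
  thus False using etapos by simp
qed

lemma eig_pos:
  assumes fin: "finite J" and sc: "scin E J" and nn: "\<forall>v\<in>J. 0 \<le> x v" and s1: "sum x J = 1"
    and eig: "\<forall>v\<in>J. Av E J x v = lam * x v"
  shows "\<forall>v\<in>J. 0 < x v"
proof (rule ccontr)
  assume "\<not> ?thesis"
  then obtain a where a: "a \<in> J" "x a \<le> 0" by force
  define S where "S = {v\<in>J. 0 < x v}"
  have "S \<noteq> {}"
  proof
    assume "S = {}"
    hence "\<forall>v\<in>J. x v = 0" using nn by (force simp: S_def)
    hence "sum x J = 0" by simp
    thus False using s1 by simp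
  qed
  then obtain b where b: "b \<in> S" by blast
  have "(a, b) \<in> (E \<inter> J \<times> J)\<^sup>*" using sc a b unfolding scin_def S_def by blast
  then obtain u w where uw: "(u, w) \<in> E \<inter> J \<times> J" "u \<notin> S" "w \<in> S"
    using path_exit[of a b _ S] a b by (force simp: S_def)
  have xu: "x u = 0" using uw nn by (force simp: S_def)
  have "adj E u w * x w \<le> Av E J x u" unfolding Av_def
    using uw fin nn by (intro member_le_sum) (auto simp: adj_nonneg)
  moreover have "adj E u w = 1" using uw by (simp add: adj_def)
  moreover have "x w > 0" using uw by (auto simp: S_def)
  ultimately show False using eig uw xu by auto
qed

lemma value_in_Pi:
  assumes fin: "finite V" and JV: "J \<subseteq> V" and fx: "feas E J x lam"
    and eig: "\<forall>v\<in>J. Av E J x v = lam * x v"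
  shows "lam \<in> comp_eigenvalues V E"
proof -
  have z: "\<forall>v. v \<notin> J \<longrightarrow> x v = 0" and nn: "\<forall>v\<in>J. 0 \<le> x v" and s1: "sum x J = 1"
    using fx by (auto simp: feas_def)
  have AV: "(\<Sum>u\<in>V. adj E v u * x u) = Av E J x v" for v
    unfolding Av_def using fin JV z by (intro sum.mono_neutral_left[symmetric]) auto
  have t0: "x v * ((\<Sum>u\<in>V. adj E v u * x u) - lam * x v) = 0" for v
    using AV eig z by (cases "v \<in> J") auto
  show ?thesis unfolding comp_eigenvalues_def
  proof (intro CollectI exI conjI ballI)
    fix v assume "v \<in> V" show "0 \<le> x v" using nn z by (cases "v \<in> J") auto
  next
    show "\<exists>v\<in>V. x v \<noteq> 0"
    proof (rule ccontr)
      assume "\<not> ?thesis" hence "sum x J = 0" using JV by (auto intro: sum.neutral)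
      thus False using s1 by simp
    qed
  next
    fix v assume "v \<in> V"
    show "0 \<le> (\<Sum>u\<in>V. adj E v u * x u) - lam * x v"
      using AV eig z Av_nonneg[OF nn] by (cases "v \<in> J") auto
  next
    show "(\<Sum>v\<in>V. x v * ((\<Sum>u\<in>V. adj E v u * x u) - lam * x v)) = 0"
      by (intro sum.neutral ballI) (rule t0)
  qed
qed

lemma feas_mono:
  assumes fin: "finite J" and HJ: "H \<subseteq> J" and f: "feas E H z a"
  shows "feas E J z a"
proof -
  have z: "\<forall>v. v \<notin> H \<longrightarrow> z v = 0" using f by (auto simp: feas_def)
  have AJ: "Av E J z v = Av E H z v" for v
    unfolding Av_def using fin HJ z by (intro sum.mono_neutral_left[symmetric]) auto
  have sumeq: "sum z J = sum z H" using fin HJ z by (intro sum.mono_neutral_left[symmetric]) auto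
  show ?thesis unfolding feas_def
  proof (intro conjI ballI allI impI)
    fix v assume "v \<notin> J" thus "z v = 0" using z HJ by auto
  next
    fix v assume "v \<in> J" thus "0 \<le> z v" using f z by (cases "v \<in> H") (auto simp: feas_def)
  next
    show "sum z J = 1" using sumeq f by (simp add: feas_def)
  next
    fix v assume v: "v \<in> J"
    show "a * z v \<le> Av E J z v"
    proof (cases "v \<in> H")
      case True thus ?thesis using f AJ by (auto simp: feas_def)
    next
      case False hence "z v = 0" using z by auto
      moreover have "0 \<le> Av E J z v" using AJ Av_nonneg[of H z E v] f by (auto simp: feas_def)
      ultimately show ?thesis by simp
    qed
  qed
qed

lemma strict_step:
  assumes fin: "finite J" and HJ: "H \<subseteq> J" "H \<noteq> J" and sc: "scin E J" and nl: "\<forall>v. (v, v) \<notin> E"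
    and fz: "feas E H z a" and fx: "feas E J x b" and mx: "\<forall>y \<mu>. feas E J y \<mu> \<longrightarrow> \<mu> \<le> b"
  shows "a < b"
proof -
  have fzJ: "feas E J z a" using feas_mono[OF fin HJ(1) fz] .
  hence ab: "a \<le> b" using mx by blast
  show ?thesis
  proof (rule ccontr)
    assume "\<not> a < b" hence "a = b" using ab by simp
    hence fb: "feas E J z b" using fzJ by simp
    have e: "\<forall>v\<in>J. Av E J z v = b * z v" by (rule maximizer_eig[OF fin sc nl fb mx])
    have nn: "\<forall>v\<in>J. 0 \<le> z v" and s1: "sum z J = 1" using fzJ unfolding feas_def by blast+
    have pos: "\<forall>v\<in>J. 0 < z v" by (rule eig_pos[OF fin sc nn s1 e])
    obtain v where v: "v \<in> J" "v \<notin> H" using HJ by blast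
    have "z v = 0" using fz v(2) unfolding feas_def by blast
    moreover have "0 < z v" using pos v(1) by blast
    ultimately show False by simp
  qed
qed

lemma max_value:
  assumes fin: "finite V" and JV: "J \<subseteq> V" "J \<noteq> {}" and sc: "scin E J" and nl: "\<forall>v. (v, v) \<notin> E"
  shows "\<exists>x lam. feas E J x lam \<and> (\<forall>y \<mu>. feas E J y \<mu> \<longrightarrow> \<mu> \<le> lam) \<and> lam \<in> comp_eigenvalues V E"
proof -
  have fJ: "finite J" using fin JV finite_subset by blast
  obtain x lam where h: "feas E J x lam" "\<forall>y \<mu>. feas E J y \<mu> \<longrightarrow> \<mu> \<le> lam"
    using exists_max[OF fJ JV(2)] by blast
  have "lam \<in> comp_eigenvalues V E"
    using value_in_Pi[OF fin JV(1) h(1) maximizer_eig[OF fJ sc nl h]] .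
  thus ?thesis using h by blast
qed



lemma chain4:
  assumes fin: "finite V" and nl: "\<forall>v. (v, v) \<notin> E"
    and ne: "Y1 \<noteq> {}" and c: "Y1 \<subset> Y2" "Y2 \<subset> Y3" "Y3 \<subset> Y4" "Y4 \<subseteq> V"
    and sc: "scin E Y1" "scin E Y2" "scin E Y3" "scin E Y4"
  shows "card (comp_eigenvalues V E) \<noteq> 3"
proof -
  have s4: "Y4 \<subseteq> V" using c(4) .
  have s3: "Y3 \<subseteq> V" using c(3,4) by (meson order.trans psubset_imp_subset)
  have s2: "Y2 \<subseteq> V" using c(2) s3 by (meson order.trans psubset_imp_subset)
  have s1: "Y1 \<subseteq> V" using c(1) s2 by (meson order.trans psubset_imp_subset)
  have n2: "Y2 \<noteq> {}" and n3: "Y3 \<noteq> {}" and n4: "Y4 \<noteq> {}" using ne c(1,2,3) by auto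
  obtain x1 l1 where h1: "feas E Y1 x1 l1" "l1 \<in> comp_eigenvalues V E"
    using max_value[OF fin s1 ne sc(1) nl] by blast
  obtain x2 l2 where h2: "feas E Y2 x2 l2" "\<forall>y \<mu>. feas E Y2 y \<mu> \<longrightarrow> \<mu> \<le> l2" "l2 \<in> comp_eigenvalues V E"
    using max_value[OF fin s2 n2 sc(2) nl] by blast
  obtain x3 l3 where h3: "feas E Y3 x3 l3" "\<forall>y \<mu>. feas E Y3 y \<mu> \<longrightarrow> \<mu> \<le> l3" "l3 \<in> comp_eigenvalues V E"
    using max_value[OF fin s3 n3 sc(3) nl] by blast
  obtain x4 l4 where h4: "feas E Y4 x4 l4" "\<forall>y \<mu>. feas E Y4 y \<mu> \<longrightarrow> \<mu> \<le> l4" "l4 \<in> comp_eigenvalues V E"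
    using max_value[OF fin s4 n4 sc(4) nl] by blast
  have f4: "finite Y4" using fin s4 finite_subset by blast
  have f3: "finite Y3" using fin s3 finite_subset by blast
  have f2: "finite Y2" using fin s2 finite_subset by blast
  have "l1 < l2" by (rule strict_step[OF f2 psubset_imp_subset[OF c(1)] _ sc(2) nl h1(1) h2(1) h2(2)]) (use c(1) in blast)
  moreover have "l2 < l3" by (rule strict_step[OF f3 psubset_imp_subset[OF c(2)] _ sc(3) nl h2(1) h3(1) h3(2)]) (use c(2) in blast)
  moreover have "l3 < l4" by (rule strict_step[OF f4 psubset_imp_subset[OF c(3)] _ sc(4) nl h3(1) h4(1) h4(2)]) (use c(3) in blast)
  ultimately have c4: "card {l1, l2, l3, l4} = 4" by simp
  show ?thesis
  proof (cases "finite (comp_eigenvalues V E)")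
    case True
    have "{l1, l2, l3, l4} \<subseteq> comp_eigenvalues V E" using h1 h2 h3 h4 by blast
    hence "card {l1, l2, l3, l4} \<le> card (comp_eigenvalues V E)"
      using True by (intro card_mono)
    thus ?thesis using c4 by simp
  next
    case False thus ?thesis by simp
  qed
qed



lemma hub_scin:
  assumes "h \<in> Z" "\<forall>z\<in>Z. (z, h) \<in> (R \<inter> Z \<times> Z)\<^sup>* \<and> (h, z) \<in> (R \<inter> Z \<times> Z)\<^sup>*"
  shows "scin R Z"
  unfolding scin_def using assms by (meson rtrancl_trans)

lemma fwd_path:
  assumes "\<forall>t. a \<le> t \<and> t < b \<longrightarrow> (c t, c (Suc t)) \<in> R" "c ` {a..b} \<subseteq> Z" "a \<le> b"
  shows "(c a, c b) \<in> (R \<inter> Z \<times> Z)\<^sup>*"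
  using assms
proof (induction b)
  case 0 thus ?case by simp
next
  case (Suc b)
  show ?case
  proof (cases "a = Suc b")
    case True thus ?thesis by simp
  next
    case False
    hence ab: "a \<le> b" using Suc.prems by simp
    have "c ` {a..b} \<subseteq> Z" using Suc.prems by auto
    hence "(c a, c b) \<in> (R \<inter> Z \<times> Z)\<^sup>*" using Suc.IH Suc.prems ab by auto
    moreover have "(c b, c (Suc b)) \<in> R \<inter> Z \<times> Z" using Suc.prems ab by auto
    ultimately show ?thesis by (rule rtrancl_into_rtrancl)
  qed
qed

lemma scin_union:
  assumes "scin R A" "scin R B" "A \<inter> B \<noteq> {}"
  shows "scin R (A \<union> B)"
proof -
  obtain h where h: "h \<in> A" "h \<in> B" using assms(3) by blast
  have mA: "(R \<inter> A \<times> A)\<^sup>* \<subseteq> (R \<inter> (A \<union> B) \<times> (A \<union> B))\<^sup>*" by (intro rtrancl_mono) auto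
  have mB: "(R \<inter> B \<times> B)\<^sup>* \<subseteq> (R \<inter> (A \<union> B) \<times> (A \<union> B))\<^sup>*" by (intro rtrancl_mono) auto
  show ?thesis
    using h assms(1,2) mA mB unfolding scin_def by (intro hub_scin[of h, unfolded scin_def]) blast+
qed

definition cyc :: "('v \<times> 'v) set \<Rightarrow> (nat \<Rightarrow> 'v) \<Rightarrow> nat \<Rightarrow> bool" where
  "cyc R c m \<longleftrightarrow> (\<forall>t. Suc t < m \<longrightarrow> (c t, c (Suc t)) \<in> R) \<and> (c (m - 1), c 0) \<in> R"

definition cycarcs :: "(nat \<Rightarrow> 'v) \<Rightarrow> nat \<Rightarrow> ('v \<times> 'v) set" where
  "cycarcs c m = {(c t, c (Suc t)) | t. Suc t < m} \<union> {(c (m - 1), c 0)}"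

lemma cyc_fwd:
  assumes "cyc R c m" "c ` {a..b} \<subseteq> Z" "a \<le> b" "b < m"
  shows "(c a, c b) \<in> (R \<inter> Z \<times> Z)\<^sup>*"
  using assms by (intro fwd_path) (auto simp: cyc_def)

lemma cyc_back:
  assumes "cyc R c m" "c (m - 1) \<in> Z" "c 0 \<in> Z"
  shows "(c (m - 1), c 0) \<in> (R \<inter> Z \<times> Z)\<^sup>*"
  using assms by (auto simp: cyc_def)

lemma cyc_scin:
  assumes cy: "cyc R c m" and m: "m \<ge> 1"
  shows "scin R (c ` {..<m})"
proof (rule hub_scin[of "c 0"])
  show "c 0 \<in> c ` {..<m}" using m by auto
  show "\<forall>z\<in>c ` {..<m}. (z, c 0) \<in> (R \<inter> c ` {..<m} \<times> c ` {..<m})\<^sup>* \<and>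
      (c 0, z) \<in> (R \<inter> c ` {..<m} \<times> c ` {..<m})\<^sup>*"
  proof
    fix z assume "z \<in> c ` {..<m}"
    then obtain t where t: "t < m" "z = c t" by auto
    have "(c 0, c t) \<in> (R \<inter> c ` {..<m} \<times> c ` {..<m})\<^sup>*"
      using t by (intro cyc_fwd[OF cy]) auto
    moreover have "(c t, c (m - 1)) \<in> (R \<inter> c ` {..<m} \<times> c ` {..<m})\<^sup>*"
      using t by (intro cyc_fwd[OF cy]) auto
    moreover have "(c (m - 1), c 0) \<in> (R \<inter> c ` {..<m} \<times> c ` {..<m})\<^sup>*"
      using m by (intro cyc_back[OF cy]) auto
    ultimately show "(z, c 0) \<in> (R \<inter> c ` {..<m} \<times> c ` {..<m})\<^sup>* \<and>
      (c 0, z) \<in> (R \<inter> c ` {..<m} \<times> c ` {..<m})\<^sup>*" using t by (meson rtrancl_trans)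
  qed
qed

lemma chord_in:
  assumes cy: "cyc R c m" and inj: "inj_on c {..<m}" and ik: "i < m" "k < m" "k \<noteq> i" "k \<noteq> Suc i"
    "\<not> (i = m - 1 \<and> k = 0)" and ch: "(c i, c k) \<in> R"
  shows "\<exists>Y. {c i} \<subset> Y \<and> Y \<subset> c ` {..<m} \<and> scin R Y"
proof (cases "k < i")
  case True
  define Y where "Y = c ` {k..i}"
  have cne: "c k \<noteq> c i" using inj ik by (auto dest: inj_onD)
  have sc: "scin R Y"
  proof (rule hub_scin[of "c k"])
    show "c k \<in> Y" using True by (simp add: Y_def)
    show "\<forall>z\<in>Y. (z, c k) \<in> (R \<inter> Y \<times> Y)\<^sup>* \<and> (c k, z) \<in> (R \<inter> Y \<times> Y)\<^sup>*"
    proof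
      fix z assume "z \<in> Y"
      then obtain t where t: "k \<le> t" "t \<le> i" "z = c t" by (auto simp: Y_def)
      have "(c k, c t) \<in> (R \<inter> Y \<times> Y)\<^sup>*" using t ik by (intro cyc_fwd[OF cy]) (auto simp: Y_def)
      moreover have "(c t, c i) \<in> (R \<inter> Y \<times> Y)\<^sup>*" using t ik by (intro cyc_fwd[OF cy]) (auto simp: Y_def)
      moreover have "(c i, c k) \<in> R \<inter> Y \<times> Y" using ch True by (auto simp: Y_def)
      ultimately show "(z, c k) \<in> (R \<inter> Y \<times> Y)\<^sup>* \<and> (c k, z) \<in> (R \<inter> Y \<times> Y)\<^sup>*" using t
        by (meson rtrancl_into_rtrancl)
    qed
  qed
  have "Y \<subseteq> c ` {..<m}" using ik by (auto simp: Y_def)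
  moreover have "\<exists>p\<in>c ` {..<m}. p \<notin> Y"
  proof (cases "Suc i < m")
    case True
    have "c (Suc i) \<notin> Y"
    proof
      assume "c (Suc i) \<in> Y"
      then obtain t where "t \<in> {k..i}" "c (Suc i) = c t" by (auto simp: Y_def)
      hence "Suc i = t" using inj True ik by (intro inj_onD[OF inj]) auto
      thus False using \<open>t \<in> {k..i}\<close> by simp
    qed
    thus ?thesis using True by blast
  next
    case False
    hence "i = m - 1" using ik by simp
    hence "k \<noteq> 0" using ik by auto
    have "c 0 \<notin> Y"
    proof
      assume "c 0 \<in> Y"
      then obtain t where "t \<in> {k..i}" "c 0 = c t" by (auto simp: Y_def)
      hence "0 = t" using inj ik by (intro inj_onD[OF inj]) auto
      thus False using \<open>t \<in> {k..i}\<close> \<open>k \<noteq> 0\<close> by simp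
    qed
    thus ?thesis using ik by force
  qed
  ultimately have "Y \<subset> c ` {..<m}" by blast
  moreover have "{c i} \<subset> Y" using cne True by (auto simp: Y_def)
  ultimately show ?thesis using sc by blast
next
  case False
  hence ki: "Suc i < k" using ik by simp
  define Y where "Y = c ` {..i} \<union> c ` {k..<m}"
  have cne: "c k \<noteq> c i" using inj ik by (auto dest: inj_onD)
  have m1: "m - 1 \<in> {k..<m}" using ik ki by auto
  have sc: "scin R Y"
  proof (rule hub_scin[of "c 0"])
    show "c 0 \<in> Y" by (simp add: Y_def)
    have bk: "(c (m - 1), c 0) \<in> (R \<inter> Y \<times> Y)\<^sup>*"
      using m1 by (intro cyc_back[OF cy]) (auto simp: Y_def)
    have ch': "(c i, c k) \<in> R \<inter> Y \<times> Y" using ch ik by (auto simp: Y_def)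
    have p0i: "(c 0, c i) \<in> (R \<inter> Y \<times> Y)\<^sup>*" using ik by (intro cyc_fwd[OF cy]) (auto simp: Y_def)
    have pkm: "(c k, c (m - 1)) \<in> (R \<inter> Y \<times> Y)\<^sup>*" using ik m1 by (intro cyc_fwd[OF cy]) (auto simp: Y_def)
    show "\<forall>z\<in>Y. (z, c 0) \<in> (R \<inter> Y \<times> Y)\<^sup>* \<and> (c 0, z) \<in> (R \<inter> Y \<times> Y)\<^sup>*"
    proof
      fix z assume "z \<in> Y"
      then consider t where "t \<le> i" "z = c t" | t where "k \<le> t" "t < m" "z = c t"
        by (auto simp: Y_def)
      thus "(z, c 0) \<in> (R \<inter> Y \<times> Y)\<^sup>* \<and> (c 0, z) \<in> (R \<inter> Y \<times> Y)\<^sup>*"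
      proof cases
        case (1 t)
        have "(c 0, c t) \<in> (R \<inter> Y \<times> Y)\<^sup>*" using 1 ik by (intro cyc_fwd[OF cy]) (auto simp: Y_def)
        moreover have "(c t, c i) \<in> (R \<inter> Y \<times> Y)\<^sup>*" using 1 ik by (intro cyc_fwd[OF cy]) (auto simp: Y_def)
        ultimately show ?thesis using 1 bk ch' pkm by (meson rtrancl_trans rtrancl_into_rtrancl r_into_rtrancl)
      next
        case (2 t)
        have "(c k, c t) \<in> (R \<inter> Y \<times> Y)\<^sup>*" using 2 ik by (intro cyc_fwd[OF cy]) (auto simp: Y_def)
        moreover have "(c t, c (m - 1)) \<in> (R \<inter> Y \<times> Y)\<^sup>*" using 2 ik m1 by (intro cyc_fwd[OF cy]) (auto simp: Y_def)
        ultimately show ?thesis using 2 bk ch' p0i by (meson rtrancl_trans rtrancl_into_rtrancl r_into_rtrancl)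
      qed
    qed
  qed
  have "c (Suc i) \<notin> Y"
  proof
    assume "c (Suc i) \<in> Y"
    then obtain t where t: "t \<in> {..i} \<union> {k..<m}" "c (Suc i) = c t" unfolding Y_def by blast
    hence "Suc i = t" using inj ki ik by (intro inj_onD[OF inj]) auto
    thus False using t(1) ki by auto
  qed
  moreover have "Y \<subseteq> c ` {..<m}" using ik by (auto simp: Y_def)
  ultimately have "Y \<subset> c ` {..<m}" using ki ik by force
  moreover have "{c i} \<subset> Y" using cne ik by (auto simp: Y_def)
  ultimately show ?thesis using sc by blast
qed

definition bad :: "('v \<times> 'v) set \<Rightarrow> 'v set \<Rightarrow> bool" where
  "bad R W \<longleftrightarrow> (\<exists>X1 X2 X3. X1 \<noteq> {} \<and> X1 \<subset> X2 \<and> X2 \<subset> X3 \<and> X3 \<subset> W \<and>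
      scin R X1 \<and> scin R X2 \<and> scin R X3)"

lemma scin_single: "scin R {x}"
  unfolding scin_def by simp

lemma cross_chord:
  assumes cc: "cyc R c m" and cd: "cyc R d n" and ic: "inj_on c {..<m}" and id: "inj_on d {..<n}"
    and m: "m \<ge> 2" and n: "n \<ge> 2" and c0: "c 0 = d 0" and int: "c ` {..<m} \<inter> d ` {..<n} = {c 0}"
    and ch: "(c i, d j) \<in> R" and ij: "1 \<le> i" "i < m" "1 \<le> j" "j < n" "\<not> (i = m - 1 \<and> j = 1)"
  shows "bad R (c ` {..<m} \<union> d ` {..<n})"
proof -
  define C where "C = c ` {..<m}"
  define D where "D = d ` {..<n}"
  define P where "P = c ` {..i} \<union> d ` {j..<n}"
  have scC: "scin R C" using cyc_scin[OF cc] m by (simp add: C_def)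
  have scD: "scin R D" using cyc_scin[OF cd] n by (simp add: D_def)
  have n1: "n - 1 \<in> {j..<n}" using ij by auto
  have scP: "scin R P"
  proof (rule hub_scin[of "c 0"])
    show "c 0 \<in> P" by (simp add: P_def)
    have "c 0 \<in> P" by (simp add: P_def)
    hence d0P: "d 0 \<in> P" using c0 by simp
    have "d (n - 1) \<in> P" using n1 by (simp add: P_def)
    hence "(d (n - 1), d 0) \<in> (R \<inter> P \<times> P)\<^sup>*" using d0P by (intro cyc_back[OF cd])
    hence bk: "(d (n - 1), c 0) \<in> (R \<inter> P \<times> P)\<^sup>*" using c0 by simp
    have ch': "(c i, d j) \<in> R \<inter> P \<times> P" using ch ij by (auto simp: P_def)
    have p0i: "(c 0, c i) \<in> (R \<inter> P \<times> P)\<^sup>*" using ij by (intro cyc_fwd[OF cc]) (auto simp: P_def)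
    have pjn: "(d j, d (n - 1)) \<in> (R \<inter> P \<times> P)\<^sup>*" using ij n1 by (intro cyc_fwd[OF cd]) (auto simp: P_def)
    show "\<forall>z\<in>P. (z, c 0) \<in> (R \<inter> P \<times> P)\<^sup>* \<and> (c 0, z) \<in> (R \<inter> P \<times> P)\<^sup>*"
    proof
      fix z assume "z \<in> P"
      then consider t where "t \<le> i" "z = c t" | t where "j \<le> t" "t < n" "z = d t"
        by (auto simp: P_def)
      thus "(z, c 0) \<in> (R \<inter> P \<times> P)\<^sup>* \<and> (c 0, z) \<in> (R \<inter> P \<times> P)\<^sup>*"
      proof cases
        case (1 t)
        have "(c 0, c t) \<in> (R \<inter> P \<times> P)\<^sup>*" using 1 ij by (intro cyc_fwd[OF cc]) (auto simp: P_def)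
        moreover have "(c t, c i) \<in> (R \<inter> P \<times> P)\<^sup>*" using 1 ij by (intro cyc_fwd[OF cc]) (auto simp: P_def)
        ultimately show ?thesis using 1 bk ch' pjn by (meson rtrancl_trans rtrancl_into_rtrancl r_into_rtrancl)
      next
        case (2 t)
        have "(d j, d t) \<in> (R \<inter> P \<times> P)\<^sup>*" using 2 ij by (intro cyc_fwd[OF cd]) (auto simp: P_def)
        moreover have "(d t, d (n - 1)) \<in> (R \<inter> P \<times> P)\<^sup>*" using 2 ij n1 by (intro cyc_fwd[OF cd]) (auto simp: P_def)
        ultimately show ?thesis using 2 bk ch' p0i by (meson rtrancl_trans rtrancl_into_rtrancl r_into_rtrancl)
      qed
    qed
  qed
  have dnotC: "d t \<notin> C" if "0 < t" "t < n" for t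
  proof
    assume "d t \<in> C"
    hence "d t = d 0" using int that c0 by (auto simp: C_def)
    hence "t = 0" using id that n by (intro inj_onD[OF id]) auto
    thus False using that by simp
  qed
  have cnotD: "c t \<notin> D" if "0 < t" "t < m" for t
  proof
    assume "c t \<in> D"
    hence "c t = c 0" using int that by (auto simp: D_def)
    hence "t = 0" using ic that m by (intro inj_onD[OF ic]) auto
    thus False using that by simp
  qed
  have c01: "c 0 \<noteq> c 1" using ic m by (metis inj_onD lessThan_iff one_neq_zero less_le_trans pos2 one_less_numeral_iff semiring_norm(76))
  have d01: "d 0 \<noteq> d 1" using id n by (metis inj_onD lessThan_iff one_neq_zero less_le_trans pos2 one_less_numeral_iff semiring_norm(76))
  show ?thesis
  proof (cases "j \<ge> 2")
    case True
    define X3 where "X3 = C \<union> P"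
    have "c 0 \<in> C \<inter> P" using m by (auto simp: C_def P_def)
    hence "scin R X3" unfolding X3_def using scC scP by (intro scin_union) auto
    moreover have "{c 0} \<subset> C"
    proof -
      have "c 1 \<in> C" "c 0 \<in> C" using m by (auto simp: C_def)
      thus ?thesis using c01 by auto
    qed
    moreover have "C \<subset> X3"
    proof -
      have "d (n - 1) \<in> X3" using n1 by (auto simp: X3_def P_def)
      moreover have "d (n - 1) \<notin> C" using dnotC n by simp
      ultimately show ?thesis by (auto simp: X3_def)
    qed
    moreover have "X3 \<subset> C \<union> D"
    proof -
      have "X3 \<subseteq> C \<union> D" using ij by (auto simp: X3_def P_def C_def D_def)
      moreover have "d 1 \<in> C \<union> D" using n by (auto simp: D_def)
      moreover have "d 1 \<notin> X3"
      proof
        assume "d 1 \<in> X3"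
        moreover have "d 1 \<notin> C" using dnotC n by simp
        moreover have "d 1 \<notin> d ` {j..<n}"
        proof
          assume "d 1 \<in> d ` {j..<n}"
          then obtain t where "t \<in> {j..<n}" "d 1 = d t" by auto
          hence "1 = t" using n by (intro inj_onD[OF id]) auto
          thus False using True \<open>t \<in> {j..<n}\<close> by simp
        qed
        moreover have "c ` {..i} \<subseteq> C" using ij by (auto simp: C_def)
        ultimately show False by (auto simp: X3_def P_def)
      qed
      ultimately show ?thesis by blast
    qed
    ultimately show ?thesis unfolding bad_def C_def D_def using scin_single[of R "c 0"] scC
      by (metis C_def empty_not_insert)
  next
    case False
    hence j1: "j = 1" using ij by simp
    hence im: "i < m - 1" using ij by auto
    define X3 where "X3 = D \<union> P"
    have "d 0 \<in> D" using n by (auto simp: D_def)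
    hence "c 0 \<in> D" using c0 by simp
    moreover have "c 0 \<in> P" by (simp add: P_def)
    ultimately have "c 0 \<in> D \<inter> P" by blast
    hence "scin R X3" unfolding X3_def using scD scP by (intro scin_union) auto
    moreover have "{d 0} \<subset> D"
    proof -
      have "d 1 \<in> D" "d 0 \<in> D" using n by (auto simp: D_def)
      thus ?thesis using d01 by auto
    qed
    moreover have "D \<subset> X3"
    proof -
      have "c i \<in> X3" by (auto simp: X3_def P_def)
      moreover have "c i \<notin> D" using cnotD ij by simp
      ultimately show ?thesis by (auto simp: X3_def)
    qed
    moreover have "X3 \<subset> C \<union> D"
    proof -
      have "X3 \<subseteq> C \<union> D" using ij by (auto simp: X3_def P_def C_def D_def)
      moreover have "c (m - 1) \<in> C \<union> D" using m by (auto simp: C_def)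
      moreover have "c (m - 1) \<notin> X3"
      proof
        assume "c (m - 1) \<in> X3"
        moreover have "c (m - 1) \<notin> D" using cnotD m by simp
        moreover have "c (m - 1) \<notin> c ` {..i}"
        proof
          assume "c (m - 1) \<in> c ` {..i}"
          then obtain t where "t \<le> i" "c (m - 1) = c t" by auto
          hence "m - 1 = t" using m ij by (intro inj_onD[OF ic]) auto
          thus False using im \<open>t \<le> i\<close> by simp
        qed
        moreover have "d ` {j..<n} \<subseteq> D" by (auto simp: D_def)
        ultimately show False by (auto simp: X3_def P_def)
      qed
      ultimately show ?thesis by blast
    qed
    ultimately show ?thesis unfolding bad_def C_def D_def using scin_single[of R "d 0"] scD
      by (metis D_def empty_not_insert)
  qed
qed

lemma chord_bad:
  assumes cy: "cyc R c m" and inj: "inj_on c {..<m}" and ik: "i < m" "k < m" "k \<noteq> i" "k \<noteq> Suc i"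
    "\<not> (i = m - 1 \<and> k = 0)" and ch: "(c i, c k) \<in> R" and CW: "c ` {..<m} \<subset> W" and m: "m \<ge> 1"
  shows "bad R W"
proof -
  obtain Y where Y: "{c i} \<subset> Y" "Y \<subset> c ` {..<m}" "scin R Y" using chord_in[OF cy inj ik ch] by blast
  show ?thesis unfolding bad_def using Y CW scin_single[of R "c i"] cyc_scin[OF cy m]
    by (metis empty_not_insert)
qed

lemma classify:
  assumes cc: "cyc R c m" and cd: "cyc R d n" and ic: "inj_on c {..<m}" and id: "inj_on d {..<n}"
    and m: "m \<ge> 2" and n: "n \<ge> 2" and c0: "c 0 = d 0" and int: "c ` {..<m} \<inter> d ` {..<n} = {c 0}"
    and RW: "R \<subseteq> (c ` {..<m} \<union> d ` {..<n}) \<times> (c ` {..<m} \<union> d ` {..<n})"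
    and nl: "\<forall>v. (v, v) \<notin> R" and nb: "\<not> bad R (c ` {..<m} \<union> d ` {..<n})"
  shows "R \<subseteq> cycarcs c m \<union> cycarcs d n \<union> {(c (m - 1), d 1), (d (n - 1), c 1)}"
proof
  fix e assume e: "e \<in> R"
  obtain p q where pq: "e = (p, q)" by (cases e)
  define C where "C = c ` {..<m}"
  define D where "D = d ` {..<n}"
  have pW: "p \<in> C \<union> D" and qW: "q \<in> C \<union> D" using RW e pq by (auto simp: C_def D_def)
  have dnotC: "d t \<notin> C" if "0 < t" "t < n" for t
  proof
    assume "d t \<in> C"
    hence "d t = d 0" using int that c0 by (auto simp: C_def)
    hence "t = 0" using id that n by (intro inj_onD[OF id]) auto
    thus False using that by simp
  qed
  have cnotD: "c t \<notin> D" if "0 < t" "t < m" for t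
  proof
    assume "c t \<in> D"
    hence "c t = c 0" using int that by (auto simp: D_def)
    hence "t = 0" using ic that m by (intro inj_onD[OF ic]) auto
    thus False using that by simp
  qed
  have CW: "C \<subset> C \<union> D" using dnotC[of 1] n by (auto simp: D_def)
  have DW: "D \<subset> C \<union> D" using cnotD[of 1] m by (auto simp: C_def)
  show "e \<in> cycarcs c m \<union> cycarcs d n \<union> {(c (m - 1), d 1), (d (n - 1), c 1)}"
  proof (cases "p \<in> C \<and> q \<in> C")
    case True
    then obtain i k where ik: "i < m" "k < m" "p = c i" "q = c k" by (auto simp: C_def)
    have "(c i, c k) \<in> cycarcs c m"
    proof (rule ccontr)
      assume nc: "(c i, c k) \<notin> cycarcs c m"
      have "k \<noteq> Suc i"
      proof
        assume "k = Suc i" hence "(c i, c k) \<in> cycarcs c m" using ik by (auto simp: cycarcs_def)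
        thus False using nc by simp
      qed
      moreover have "\<not> (i = m - 1 \<and> k = 0)"
      proof
        assume "i = m - 1 \<and> k = 0" hence "(c i, c k) \<in> cycarcs c m" by (simp add: cycarcs_def)
        thus False using nc by simp
      qed
      moreover have "k \<noteq> i" using nl e pq ik by auto
      ultimately have "bad R (C \<union> D)"
        using chord_bad[OF cc ic ik(1,2) _ _ _ _ CW[unfolded C_def]] e pq ik m by (auto simp: C_def)
      thus False using nb by (simp add: C_def D_def)
    qed
    thus ?thesis using pq ik by auto
  next
    case nC: False
    show ?thesis
    proof (cases "p \<in> D \<and> q \<in> D")
      case True
      then obtain i k where ik: "i < n" "k < n" "p = d i" "q = d k" by (auto simp: D_def)
      have "(d i, d k) \<in> cycarcs d n"
      proof (rule ccontr)
        assume nc: "(d i, d k) \<notin> cycarcs d n"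
        have "k \<noteq> Suc i"
        proof
          assume "k = Suc i" hence "(d i, d k) \<in> cycarcs d n" using ik by (auto simp: cycarcs_def)
          thus False using nc by simp
        qed
        moreover have "\<not> (i = n - 1 \<and> k = 0)"
        proof
          assume "i = n - 1 \<and> k = 0" hence "(d i, d k) \<in> cycarcs d n" by (simp add: cycarcs_def)
          thus False using nc by simp
        qed
        moreover have "k \<noteq> i" using nl e pq ik by auto
        ultimately have "bad R (D \<union> C)"
          using chord_bad[OF cd id ik(1,2) _ _ _ _ ] DW e pq ik n by (auto simp: D_def Un_commute)
        thus False using nb by (simp add: C_def D_def Un_commute)
      qed
      thus ?thesis using pq ik by auto
    next
      case nD: False
      show ?thesis
      proof (cases "p \<in> C")
        case pC: True
        hence qD: "q \<in> D" "q \<notin> C" using nC qW by auto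
        have pD: "p \<notin> D" using nD qD by auto
        obtain i where i: "i < m" "p = c i" using pC by (auto simp: C_def)
        obtain j where j: "j < n" "q = d j" using qD by (auto simp: D_def)
        have i0: "i \<noteq> 0" using pD i c0 n by (auto simp: D_def)
        have j0: "j \<noteq> 0"
        proof
          assume "j = 0" hence "q = c 0" using j c0 by simp
          moreover have "c 0 \<in> C" using m by (auto simp: C_def)
          ultimately show False using qD by simp
        qed
        show ?thesis
        proof (cases "i = m - 1 \<and> j = 1")
          case True thus ?thesis using pq i j by auto
        next
          case False
          have "bad R (c ` {..<m} \<union> d ` {..<n})"
            using cross_chord[OF cc cd ic id m n c0 int, of i j] e pq i j i0 j0 False by auto
          thus ?thesis using nb by simp
        qed
      next
        case pC: False
        hence pD: "p \<in> D" using pW by auto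
        hence qC: "q \<in> C" "q \<notin> D" using nD qW by auto
        obtain j where j: "j < n" "p = d j" using pD by (auto simp: D_def)
        obtain i where i: "i < m" "q = c i" using qC by (auto simp: C_def)
        have i0: "i \<noteq> 0" using qC i c0 n by (auto simp: D_def)
        have j0: "j \<noteq> 0"
        proof
          assume "j = 0" hence "p = c 0" using j c0 by simp
          moreover have "c 0 \<in> C" using m by (auto simp: C_def)
          ultimately show False using pC by (simp add: C_def)
        qed
        have int': "d ` {..<n} \<inter> c ` {..<m} = {d 0}" using int c0 by auto
        show ?thesis
        proof (cases "j = n - 1 \<and> i = 1")
          case True thus ?thesis using pq i j by auto
        next
          case False
          have "bad R (d ` {..<n} \<union> c ` {..<m})"
            using cross_chord[OF cd cc id ic n m c0[symmetric] int', of j i] e pq i j i0 j0 False by auto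
          thus ?thesis using nb by (simp add: Un_commute)
        qed
      qed
    qed
  qed
qed

lemma cyc_iff: "cyc R c m \<longleftrightarrow> cycarcs c m \<subseteq> R"
  unfolding cyc_def cycarcs_def by auto

lemma scin_image:
  assumes sc: "scin R X" and arcs: "\<forall>(p, q)\<in>R. (f p, f q) \<in> E"
  shows "scin E (f ` X)"
proof -
  have "(f p, f q) \<in> (E \<inter> f ` X \<times> f ` X)\<^sup>*" if "(p, q) \<in> (R \<inter> X \<times> X)\<^sup>*" for p q
    using that
  proof (induction rule: rtrancl_induct)
    case base thus ?case by simp
  next
    case (step y z)
    hence "(f y, f z) \<in> E \<inter> f ` X \<times> f ` X" using arcs by auto
    with step.IH show ?case by (rule rtrancl_into_rtrancl)
  qed
  thus ?thesis using sc unfolding scin_def by blast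
qed

lemma iso_from_bij:
  assumes b: "bij_betw f W V" and h: "\<forall>p\<in>W. \<forall>q\<in>W. (f p, f q) \<in> E \<longleftrightarrow> (p, q) \<in> X"
  shows "digraph_iso V E W X"
proof -
  define g where "g = inv_into W f"
  have bg: "bij_betw g V W" unfolding g_def by (rule bij_betw_inv_into[OF b])
  have "\<forall>u\<in>V. \<forall>v\<in>V. (u, v) \<in> E \<longleftrightarrow> (g u, g v) \<in> X"
  proof (intro ballI)
    fix u v assume uv: "u \<in> V" "v \<in> V"
    have "f (g u) = u" "f (g v) = v" "g u \<in> W" "g v \<in> W"
      using uv b unfolding g_def bij_betw_def by (auto simp: f_inv_into_f inv_into_into)
    thus "(u, v) \<in> E \<longleftrightarrow> (g u, g v) \<in> X" using h by metis
  qed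
  thus ?thesis unfolding digraph_iso_def using bg by blast
qed

lemma iso_trans:
  assumes i: "digraph_iso V E W X" and b: "bij_betw \<sigma> W W2"
    and h: "\<forall>p\<in>W. \<forall>q\<in>W. (p, q) \<in> X \<longleftrightarrow> (\<sigma> p, \<sigma> q) \<in> X2"
  shows "digraph_iso V E W2 X2"
proof -
  obtain g where g: "bij_betw g V W" "\<forall>u\<in>V. \<forall>v\<in>V. (u, v) \<in> E \<longleftrightarrow> (g u, g v) \<in> X"
    using i unfolding digraph_iso_def by blast
  have "bij_betw (\<sigma> \<circ> g) V W2" using g(1) b by (rule bij_betw_trans)
  moreover have "\<forall>u\<in>V. \<forall>v\<in>V. (u, v) \<in> E \<longleftrightarrow> ((\<sigma> \<circ> g) u, (\<sigma> \<circ> g) v) \<in> X2"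
    using g h bij_betwE[OF g(1)] by auto
  ultimately show ?thesis unfolding digraph_iso_def by blast
qed



definition cc :: "nat \<Rightarrow> nat + nat" where "cc t = Inl (Suc t)"
definition dd :: "nat \<Rightarrow> nat + nat" where "dd t = cv2 (Suc t)"

lemma verts_eq: "inf_verts r s = cc ` {..<r} \<union> dd ` {..<s}"
proof -
  have "cc ` {..<r} = cv1 ` (Suc ` {..<r})" by (auto simp: cc_def cv1_def image_image)
  moreover have "dd ` {..<s} = cv2 ` (Suc ` {..<s})" by (auto simp: dd_def image_image)
  ultimately show ?thesis unfolding inf_verts_def by (simp add: image_Suc_lessThan)
qed

lemma set_shift:
  "{(g i, g (i + 1)) | i. 1 \<le> i \<and> i < r} = {(g (Suc t), g (Suc (Suc t))) | t. Suc t < r}"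
proof (intro equalityI subsetI)
  fix x assume "x \<in> {(g i, g (i + 1)) | i. 1 \<le> i \<and> i < r}"
  then obtain i where i: "x = (g i, g (i + 1))" "1 \<le> i" "i < r" by blast
  thus "x \<in> {(g (Suc t), g (Suc (Suc t))) | t. Suc t < r}" by (intro CollectI exI[of _ "i - 1"]) auto
next
  fix x assume "x \<in> {(g (Suc t), g (Suc (Suc t))) | t. Suc t < r}"
  then obtain t where t: "x = (g (Suc t), g (Suc (Suc t)))" "Suc t < r" by blast
  thus "x \<in> {(g i, g (i + 1)) | i. 1 \<le> i \<and> i < r}" by (intro CollectI exI[of _ "Suc t"]) auto
qed

lemma cycarcs_cc: "r \<ge> 1 \<Longrightarrow> cycarcs cc r = {(cv1 i, cv1 (i + 1)) | i. 1 \<le> i \<and> i < r} \<union> {(cv1 r, cv1 1)}"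
  unfolding cycarcs_def set_shift[of cv1] by (simp add: cc_def cv1_def)

lemma cycarcs_dd: "s \<ge> 1 \<Longrightarrow> cycarcs dd s = {(cv2 j, cv2 (j + 1)) | j. 1 \<le> j \<and> j < s} \<union> {(cv2 s, cv2 1)}"
  unfolding cycarcs_def set_shift[of cv2] by (simp add: dd_def)

lemma arcs_eq: "r \<ge> 1 \<Longrightarrow> s \<ge> 1 \<Longrightarrow> inf_arcs r s = cycarcs cc r \<union> cycarcs dd s"
  unfolding inf_arcs_def cycarcs_cc cycarcs_dd by auto

lemma inj_cc: "inj_on cc A" by (auto simp: inj_on_def cc_def)

lemma inj_dd: "inj_on dd A" by (auto simp: inj_on_def dd_def cv2_def split: if_splits)

lemma cc0: "cc 0 = dd 0" by (simp add: cc_def dd_def cv2_def)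

lemma int_cd: "r \<ge> 1 \<Longrightarrow> s \<ge> 1 \<Longrightarrow> cc ` {..<r} \<inter> dd ` {..<s} = {cc 0}"
  by (auto simp: cc_def dd_def cv2_def split: if_splits)

lemma cycarcs_sub: "cycarcs g m \<subseteq> g ` {..<m} \<times> g ` {..<m}" if "m \<ge> 1"
  using that by (auto simp: cycarcs_def)

definition swp :: "nat + nat \<Rightarrow> nat + nat" where
  "swp x = (case x of Inl i \<Rightarrow> cv2 i | Inr j \<Rightarrow> Inl j)"

lemma swp_cc: "swp (cc t) = dd t" by (simp add: swp_def cc_def dd_def)
lemma swp_dd: "swp (dd t) = cc t" by (cases t) (simp_all add: swp_def cc_def dd_def cv2_def)

lemma cycarcs_map:
  assumes "\<And>t. h (g t) = g' t"
  shows "(\<lambda>(a, b). (h a, h b)) ` cycarcs g m = cycarcs g' m"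
  unfolding cycarcs_def using assms by (auto simp: image_iff) (metis assms)+



lemma inj_psub:
  assumes "inj_on f B" "A \<subset> B"
  shows "f ` A \<subset> f ` B"
proof -
  obtain b where b: "b \<in> B" "b \<notin> A" using assms(2) by blast
  have "f b \<notin> f ` A"
  proof
    assume "f b \<in> f ` A"
    then obtain a where a: "a \<in> A" "f b = f a" by blast
    hence "b = a" using assms b by (intro inj_onD[OF assms(1)]) auto
    thus False using a b by simp
  qed
  thus ?thesis using assms(2) b by blast
qed

lemma swap_iso:
  assumes r: "r \<ge> 2" and s: "s \<ge> 2" and i: "digraph_iso V E (inf_verts r s) (inf_arcs r s \<union> {(cv2 s, cv1 2)})"
  shows "digraph_iso V E (inf_verts s r) (type1_arcs s r)"
proof -
  define W where "W = inf_verts r s"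
  define X where "X = cycarcs cc r \<union> cycarcs dd s \<union> {(dd (s - 1), cc 1)}"
  define X2 where "X2 = cycarcs dd r \<union> cycarcs cc s \<union> {(cc (s - 1), dd 1)}"
  have XX: "inf_arcs r s \<union> {(cv2 s, cv1 2)} = X"
    using r s arcs_eq[of r s] unfolding X_def
    by (simp add: dd_def cc_def cv1_def cv2_def numeral_2_eq_2)
  have XX2: "type1_arcs s r = X2"
  proof -
    have "(cc (s - 1), dd 1) = (cv1 s, cv2 2)" using s by (simp add: cc_def dd_def cv1_def numeral_2_eq_2)
    thus ?thesis using r s arcs_eq[of s r] unfolding X2_def type1_arcs_def by (simp add: Un_ac)
  qed
  have W: "W = cc ` {..<r} \<union> dd ` {..<s}" by (simp add: W_def verts_eq)
  have W2: "inf_verts s r = dd ` {..<r} \<union> cc ` {..<s}" by (auto simp: verts_eq)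
  have inv: "swp (swp x) = x" if "x \<in> W" for x using that W by (auto simp: swp_cc swp_dd)
  have injW: "inj_on swp W" by (rule inj_on_inverseI[of _ swp]) (rule inv)
  have img: "swp ` W = inf_verts s r" unfolding W W2 image_Un image_image swp_cc swp_dd by simp
  have b: "bij_betw swp W (inf_verts s r)" using injW img by (simp add: bij_betw_def)
  have imgX: "(\<lambda>(a, b). (swp a, swp b)) ` X = X2"
    unfolding X_def X2_def image_Un cycarcs_map[of swp cc dd, OF swp_cc] cycarcs_map[of swp dd cc, OF swp_dd]
    by (simp add: swp_cc swp_dd)
  have XW: "X \<subseteq> W \<times> W" unfolding X_def W using cycarcs_sub[of r cc] cycarcs_sub[of s dd] r s
    by auto
  have h: "\<forall>p\<in>W. \<forall>q\<in>W. (p, q) \<in> X \<longleftrightarrow> (swp p, swp q) \<in> X2"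
  proof (intro ballI iffI)
    fix p q assume "p \<in> W" "q \<in> W" "(p, q) \<in> X"
    thus "(swp p, swp q) \<in> X2" using imgX by force
  next
    fix p q assume pq: "p \<in> W" "q \<in> W" "(swp p, swp q) \<in> X2"
    then obtain a b where ab: "(a, b) \<in> X" "swp a = swp p" "swp b = swp q" using imgX by force
    have "a \<in> W" "b \<in> W" using ab XW by auto
    hence "a = p" "b = q" using ab pq injW by (auto dest: inj_onD)
    thus "(p, q) \<in> X" using ab by simp
  qed
  show ?thesis using iso_trans[OF i[folded W_def, unfolded XX] b h] XX2 by simp
qed

theorem mainTheorem3:
  fixes V :: "'a set" and E :: "('a \<times> 'a) set" and r s :: nat
  assumes "digraph V E"
    and "strongly_connected V E"
    and "card (comp_eigenvalues V E) = 3"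
    and "r \<ge> 2" and "s \<ge> 2"
    and "has_subdigraph_iso V E (inf_verts r s) (inf_arcs r s)"
  shows "\<exists>r' s'. ((r' = r \<and> s' = s) \<or> (r' = s \<and> s' = r)) \<and>
           (digraph_iso V E (inf_verts r' s') (inf_arcs r' s') \<or>
            digraph_iso V E (inf_verts r' s') (type1_arcs r' s') \<or>
            digraph_iso V E (inf_verts r' s') (type2_arcs r' s'))"
proof -
  have r: "r \<ge> 2" and s: "s \<ge> 2" using assms by auto
  define W where "W = inf_verts r s"
  define C where "C = cc ` {..<r}"
  define D where "D = dd ` {..<s}"
  have fin: "finite V" and EV: "E \<subseteq> V \<times> V" and nl: "\<forall>v. (v, v) \<notin> E"
    using assms(1) by (auto simp: digraph_def)
  obtain f where f: "inj_on f W" "f ` W \<subseteq> V" and fa: "\<forall>(u, v)\<in>inf_arcs r s. (f u, f v) \<in> E"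
    using assms(6) unfolding has_subdigraph_iso_def W_def by blast
  have WCD: "W = C \<union> D" by (simp add: W_def C_def D_def verts_eq)
  have arcs: "inf_arcs r s = cycarcs cc r \<union> cycarcs dd s" using r s by (simp add: arcs_eq)
  have cycC: "cyc (inf_arcs r s) cc r" and cycD: "cyc (inf_arcs r s) dd s"
    unfolding cyc_iff arcs by auto
  have scV: "scin E V"
  proof -
    have "E \<inter> V \<times> V = E" using EV by blast
    thus ?thesis using assms(2) unfolding strongly_connected_def scin_def by simp
  qed
  have ccC: "cc 0 \<in> C" "cc 1 \<in> C" using r by (auto simp: C_def)
  have c01: "cc 0 \<noteq> cc 1" by (simp add: cc_def)
  have dd1: "dd 1 \<in> D" "dd 1 \<notin> C" using s by (auto simp: D_def C_def dd_def cc_def cv2_def)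
  have intCD: "C \<inter> D = {cc 0}" using r s int_cd unfolding C_def D_def by simp
  have scC: "scin (inf_arcs r s) C" unfolding C_def using cyc_scin[OF cycC] r by simp
  have scD: "scin (inf_arcs r s) D" unfolding D_def using cyc_scin[OF cycD] s by simp
  have scW: "scin (inf_arcs r s) W" unfolding WCD using scC scD intCD by (intro scin_union) auto
  have CW: "C \<subset> W" using dd1 WCD by auto
  have fWV: "f ` W = V"
  proof (rule ccontr)
    assume "f ` W \<noteq> V"
    hence WV: "f ` W \<subset> V" using f(2) by blast
    have p1: "{f (cc 0)} \<subset> f ` C"
    proof -
      have neq: "f (cc 0) \<noteq> f (cc 1)" using c01 f(1) ccC CW by (meson inj_onD psubsetD)
      have A: "{f (cc 0)} \<subseteq> f ` C" using ccC by auto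
      have B: "f (cc 1) \<in> f ` C" "f (cc 1) \<notin> {f (cc 0)}" using ccC neq by auto
      show ?thesis by (rule psubsetI[OF A]) (use B in blast)
    qed
    have p2: "f ` C \<subset> f ` W" by (rule inj_psub[OF f(1) CW])
    have s1: "scin E {f (cc 0)}" by (rule scin_single)
    have s2: "scin E (f ` C)" by (rule scin_image[OF scC fa])
    have s3: "scin E (f ` W)" by (rule scin_image[OF scW fa])
    have "card (comp_eigenvalues V E) \<noteq> 3"
      by (rule chain4[OF fin nl _ p1 p2 WV subset_refl s1 s2 s3 scV]) simp
    thus False using assms(3) by simp
  qed
  define E' where "E' = {(p, q). p \<in> W \<and> q \<in> W \<and> (f p, f q) \<in> E}"
  have E'a: "\<forall>(p, q)\<in>E'. (f p, f q) \<in> E" by (auto simp: E'_def)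
  have nb: "\<not> bad E' W"
  proof
    assume "bad E' W"
    then obtain X1 X2 X3 where X: "X1 \<noteq> {}" "X1 \<subset> X2" "X2 \<subset> X3" "X3 \<subset> W"
      "scin E' X1" "scin E' X2" "scin E' X3" unfolding bad_def by blast
    have X3W: "X3 \<subseteq> W" and X2W: "X2 \<subseteq> W" using X by auto
    have "f ` X1 \<subset> f ` X2" by (rule inj_psub[OF inj_on_subset[OF f(1) X2W] X(2)])
    moreover have "f ` X2 \<subset> f ` X3" by (rule inj_psub[OF inj_on_subset[OF f(1) X3W] X(3)])
    moreover have "f ` X3 \<subset> V" using inj_psub[OF f(1) X(4)] fWV by simp
    moreover have "f ` X1 \<noteq> {}" using X(1) by simp
    moreover have "scin E (f ` X1)" "scin E (f ` X2)" "scin E (f ` X3)"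
      using scin_image[OF X(5) E'a] scin_image[OF X(6) E'a] scin_image[OF X(7) E'a] by auto
    ultimately have "card (comp_eigenvalues V E) \<noteq> 3"
      by (intro chain4[OF fin nl, of "f ` X1" "f ` X2" "f ` X3" V] scV subset_refl) auto
    thus False using assms(3) by simp
  qed
  have arcsW: "inf_arcs r s \<subseteq> W \<times> W"
    unfolding arcs WCD C_def D_def using cycarcs_sub[of r cc] cycarcs_sub[of s dd] r s by auto
  have infE': "inf_arcs r s \<subseteq> E'" using arcsW fa by (auto simp: E'_def)
  have cycC': "cyc E' cc r" and cycD': "cyc E' dd s"
    using infE' unfolding cyc_iff arcs by auto
  have E'W: "E' \<subseteq> (cc ` {..<r} \<union> dd ` {..<s}) \<times> (cc ` {..<r} \<union> dd ` {..<s})"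
    using WCD by (auto simp: E'_def C_def D_def)
  have nl': "\<forall>v. (v, v) \<notin> E'" using nl by (auto simp: E'_def)
  have nb': "\<not> bad E' (cc ` {..<r} \<union> dd ` {..<s})" using nb WCD by (simp add: C_def D_def)
  have cls: "E' \<subseteq> cycarcs cc r \<union> cycarcs dd s \<union> {(cc (r - 1), dd 1), (dd (s - 1), cc 1)}"
    using classify[OF cycC' cycD' inj_cc inj_dd r s cc0 int_cd E'W nl' nb'] r s by simp
  have e1: "(cc (r - 1), dd 1) = (cv1 r, cv2 2)" using r by (simp add: cc_def dd_def cv1_def numeral_2_eq_2)
  have e2: "(dd (s - 1), cc 1) = (cv2 s, cv1 2)" using s by (simp add: cc_def dd_def cv1_def numeral_2_eq_2)
  have cls': "E' \<subseteq> inf_arcs r s \<union> {(cv1 r, cv2 2), (cv2 s, cv1 2)}"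
    using cls unfolding arcs e1 e2 .
  have bij: "bij_betw f W V" using f(1) fWV by (simp add: bij_betw_def)
  have hE: "\<forall>p\<in>W. \<forall>q\<in>W. (f p, f q) \<in> E \<longleftrightarrow> (p, q) \<in> E'" by (auto simp: E'_def)
  have iso: "digraph_iso V E W E'" by (rule iso_from_bij[OF bij hE])
  show ?thesis
  proof (cases "(cv1 r, cv2 2) \<in> E'")
    case T1: True
    show ?thesis
    proof (cases "(cv2 s, cv1 2) \<in> E'")
      case True
      hence "E' = type2_arcs r s" using T1 cls' infE' unfolding type2_arcs_def by blast
      thus ?thesis using iso W_def by blast
    next
      case False
      hence "E' = type1_arcs r s" using T1 cls' infE' unfolding type1_arcs_def by blast
      thus ?thesis using iso W_def by blast
    qed
  next
    case T1: False
    show ?thesis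
    proof (cases "(cv2 s, cv1 2) \<in> E'")
      case True
      hence "E' = inf_arcs r s \<union> {(cv2 s, cv1 2)}" using T1 cls' infE' by blast
      hence "digraph_iso V E (inf_verts s r) (type1_arcs s r)"
        using swap_iso[OF r s] iso W_def by simp
      thus ?thesis by blast
    next
      case False
      hence "E' = inf_arcs r s" using T1 cls' infE' by blast
      thus ?thesis using iso W_def by blast
    qed
  qed
qed

end
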